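(* Let $Q_X$ be a distribution on a set $\mathcal A$ and $R_{XY}$ a distribution on $\mathcal A\times\mathcal B$, with $X$-marginal $R_X$ and conditional distribution $R_{Y|X}$. For any $a_1,a_2>0$, $$\operatorname*{argmin}_{P_{XY}}\big(a_1D(P_X\|Q_X)+a_2D(P_{XY}\|R_{XY})\big)=P^\star_{XY},$$ where $P^\star_X=(Q_X,R_X)_{\frac{a_1}{a_1+a_2}}$ and $P^\star_{Y|X}=R_{Y|X}$ (here $P_X$ denotes the $X$-marginal of $P_{XY}$).
   Context: $D$ is relative entropy (KL divergence). For $P\ll R$, $\imath_{P\|R}=\log\frac{\mathrm dP}{\mathrm dR}$; the Rényi divergence of order $\lambda\in(0,1)$ is $D_\lambda(P\|Q)=\frac1{\lambda-1}\log\mathbb E_R[\exp(\lambda\imath_{P\|R}+(1-\lambda)\imath_{Q\|R})]$ for any $R$ dominating $P,Q$. The tilted distribution $(P,Q)_\lambda$, $\lambda\in[0,1]$, is defined by $\imath_{(P,Q)_\lambda\|R}=\lambda\imath_{P\|R}+(1-\lambda)\imath_{Q\|R}+(1-\lambda)D_\lambda(P\|Q)$, i.e. it has density proportional to $(\frac{\mathrm dP}{\mathrm dR})^\lambda(\frac{\mathrm dQ}{\mathrm dR})^{1-\lambda}$ w.r.t. $R$. *)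

theory Defs
  imports "HOL-Probability.Probability"
begin

text \<open>Relative entropy (natural logarithm), with value +infinity when P is not
  absolutely continuous w.r.t. Q or the log-likelihood ratio is not P-integrable
  (in which case the integral of its positive part is infinite).\<close>
definition kl_div :: "'a measure \<Rightarrow> 'a measure \<Rightarrow> ereal" where
  "kl_div P Q =
     (if sets P = sets Q \<and> absolutely_continuous Q P \<and>
         integrable P (\<lambda>x. ln (enn2real (RN_deriv Q P x)))
      then ereal (\<integral>x. ln (enn2real (RN_deriv Q P x)) \<partial>P)
      else \<infinity>)"

definition tilted :: "real \<Rightarrow> 'a measure \<Rightarrow> 'a measure \<Rightarrow> 'a measure \<Rightarrow> bool" where
  "tilted lam P Q T \<longleftrightarrow>
     (\<exists>mu f g. sigma_finite_measure mu \<and>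
        f \<in> borel_measurable mu \<and> g \<in> borel_measurable mu \<and>
        (\<forall>x\<in>space mu. 0 \<le> f x \<and> 0 \<le> g x) \<and>
        P = density mu (\<lambda>x. ennreal (f x)) \<and> Q = density mu (\<lambda>x. ennreal (g x)) \<and>
        (let Z = (\<integral>\<^sup>+x. ennreal (f x powr lam * g x powr (1 - lam)) \<partial>mu) in
           0 < Z \<and> Z < \<infinity> \<and>
           T = density mu (\<lambda>x. ennreal (f x powr lam * g x powr (1 - lam)) / Z)))"

definition kcomp :: "'a measure \<Rightarrow> 'b measure \<Rightarrow> 'a measure \<Rightarrow> ('a \<Rightarrow> 'b measure) \<Rightarrow> ('a \<times> 'b) measure" where
  "kcomp MA MB PX K = PX \<bind> (\<lambda>x. distr (K x) (MA \<Otimes>\<^sub>M MB) (\<lambda>y. (x, y)))"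

end

theory Submission
  imports Defs
begin



lemma prob_le_eq:
  assumes P: "prob_space P" and sN: "sets N = sets P" and N1: "emeasure N (space N) \<le> 1"
    and le: "\<And>A. A \<in> sets P \<Longrightarrow> emeasure P A \<le> emeasure N A"
  shows "P = N"
proof -
  interpret P: prob_space P by fact
  have spN: "space N = space P" using sN by (rule sets_eq_imp_space_eq)
  interpret N: finite_measure N
    by (rule finite_measureI) (use N1 in \<open>auto simp: top_unique\<close>)
  have lem: "measure P A \<le> measure N A" if "A \<in> sets P" for A
    using le[OF that] by (simp add: P.emeasure_eq_measure N.emeasure_eq_measure)
  have N1': "measure N (space N) \<le> 1" using N1 by (simp add: N.emeasure_eq_measure)
  show ?thesis
  proof (rule measure_eqI)
    fix A assume A: "A \<in> sets P"
    have c: "space P - A \<in> sets P" using A by auto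
    have "measure N A = measure N (space N) - measure N (space N - A)"
      using N.finite_measure_compl[of A] A sN spN by simp
    also have "\<dots> \<le> 1 - measure P (space P - A)" using lem[OF c] N1' spN by simp
    also have "\<dots> = measure P A" using A by (simp add: P.prob_compl)
    finally have "measure N A \<le> measure P A" .
    with lem[OF A] have "measure P A = measure N A" by simp
    then show "emeasure P A = emeasure N A"
      by (simp add: P.emeasure_eq_measure N.emeasure_eq_measure)
  qed (use sN in simp)
qed




lemma kern_meas:
  assumes K: "K \<in> MA \<rightarrow>\<^sub>M prob_algebra MB"
  shows "(\<lambda>x. distr (K x) (MA \<Otimes>\<^sub>M MB) (\<lambda>y. (x, y))) \<in> MA \<rightarrow>\<^sub>M prob_algebra (MA \<Otimes>\<^sub>M MB)"
  by (rule measurable_distr_prob_space2[OF K]) simp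

lemma kcomp_density:
  assumes K: "K \<in> MA \<rightarrow>\<^sub>M prob_algebra MB"
    and sM: "sets M = sets MA" and ne: "space M \<noteq> {}"
    and phi[measurable]: "phi \<in> borel_measurable MA"
  shows "kcomp MA MB (density M phi) K = density (kcomp MA MB M K) (\<lambda>z. phi (fst z))"
proof -
  define F where "F = (\<lambda>x. distr (K x) (MA \<Otimes>\<^sub>M MB) (\<lambda>y. (x, y)))"
  have Fp: "F \<in> MA \<rightarrow>\<^sub>M prob_algebra (MA \<Otimes>\<^sub>M MB)" unfolding F_def by (rule kern_meas[OF K])
  have Fs: "F \<in> MA \<rightarrow>\<^sub>M subprob_algebra (MA \<Otimes>\<^sub>M MB)" by (rule measurable_prob_algebraD[OF Fp])
  have FsM: "F \<in> M \<rightarrow>\<^sub>M subprob_algebra (MA \<Otimes>\<^sub>M MB)" using Fs measurable_cong_sets[OF sM refl] by blast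
  have FsD: "F \<in> density M phi \<rightarrow>\<^sub>M subprob_algebra (MA \<Otimes>\<^sub>M MB)" using FsM by simp
  have spM: "space M = space MA" using sM by (rule sets_eq_imp_space_eq)
  have phiM: "phi \<in> borel_measurable M" using phi measurable_cong_sets[OF sM refl] by blast
  have sF: "sets (F x) = sets (MA \<Otimes>\<^sub>M MB)" for x unfolding F_def by simp
  have sB: "sets (M \<bind> F) = sets (MA \<Otimes>\<^sub>M MB)" using ne sF by simp
  have KX: "K x \<in> space (prob_algebra MB)" if "x \<in> space MA" for x using K that by (rule measurable_space)
  have sK: "sets (K x) = sets MB" if "x \<in> space MA" for x using KX[OF that] by (simp add: space_prob_algebra)
  show ?thesis unfolding kcomp_def F_def[symmetric]
  proof (rule measure_eqI)
    show "sets (density M phi \<bind> F) = sets (density (M \<bind> F) (\<lambda>z. phi (fst z)))"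
      using ne sF by simp
  next
    fix A assume "A \<in> sets (density M phi \<bind> F)"
    then have A[measurable]: "A \<in> sets (MA \<Otimes>\<^sub>M MB)" using ne sF by simp
    have "emeasure (density M phi \<bind> F) A = (\<integral>\<^sup>+x. emeasure (F x) A \<partial>density M phi)"
      using ne FsD A by (simp add: emeasure_bind)
    also have "\<dots> = (\<integral>\<^sup>+x. phi x * emeasure (F x) A \<partial>M)"
      using FsM A phiM by (subst nn_integral_density) (auto intro: measurable_emeasure_subprob_algebra)
    also have "\<dots> = (\<integral>\<^sup>+x. \<integral>\<^sup>+z. phi (fst z) * indicator A z \<partial>F x \<partial>M)"
    proof (rule nn_integral_cong)
      fix x assume x: "x \<in> space M"
      then have xA: "x \<in> space MA" using spM by simp
      have "(\<integral>\<^sup>+z. phi (fst z) * indicator A z \<partial>F x) = (\<integral>\<^sup>+z. phi x * indicator A z \<partial>F x)"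
        unfolding F_def using xA sK[OF xA]
        by (subst (1 2) nn_integral_distr) (auto simp: measurable_cong_sets[OF sK[OF xA] refl] A)
      also have "\<dots> = phi x * emeasure (F x) A"
        using A sF by (simp add: nn_integral_cmult_indicator)
      finally show "phi x * emeasure (F x) A = (\<integral>\<^sup>+z. phi (fst z) * indicator A z \<partial>F x)" by simp
    qed
    also have "\<dots> = (\<integral>\<^sup>+z. phi (fst z) * indicator A z \<partial>(M \<bind> F))"
      using Fs A by (subst nn_integral_bind[OF _ FsM]) auto
    also have "\<dots> = emeasure (density (M \<bind> F) (\<lambda>z. phi (fst z))) A"
      using A sB by (subst emeasure_density) (auto simp: measurable_cong_sets[OF sB refl])
    finally show "emeasure (density M phi \<bind> F) A = emeasure (density (M \<bind> F) (\<lambda>z. phi (fst z))) A" .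
  qed
qed




lemma ln_bound_low: "(x::real) > 0 \<Longrightarrow> 1 - x \<le> - ln x"
  using ln_le_minus_one[of x] by simp

lemma ln_eq1: assumes x: "(x::real) > 0" and e: "- ln x - 1 + x = 0" shows "x = 1"
proof -
  have s: "sqrt x > 0" using x by simp
  have "ln x = 2 * ln (sqrt x)" using x by (simp add: ln_sqrt)
  also have "\<dots> \<le> 2 * (sqrt x - 1)" using ln_le_minus_one[OF s] by simp
  finally have "x - 1 \<le> 2 * (sqrt x - 1)" using e by simp
  moreover have "x = sqrt x * sqrt x" using x by simp
  ultimately have "(sqrt x - 1)^2 \<le> 0" by (simp add: power2_eq_square algebra_simps)
  then have "sqrt x = 1" by simp
  then show ?thesis using x by simp
qed

lemma ln_le_powr: assumes "(y::real) > 0" "e > 0" shows "ln y \<le> y powr e / e"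
proof -
  have "ln (y powr e) \<le> y powr e - 1" using assms by (intro ln_le_minus_one) simp
  then have "e * ln y \<le> y powr e" using assms by (simp add: ln_powr)
  then show ?thesis using assms by (simp add: field_simps)
qed

lemma tilt_key:
  fixes u v z a b :: real
  assumes u: "u > 0" and v: "v > 0" and z: "z > 0" and a: "a > 0" and b: "b > 0"
  defines "t \<equiv> u powr (a/(a+b)) * v powr (b/(a+b)) / z"
  shows "t * (t/u) powr (a/b) = v * z powr (-(1+a/b))"
proof -
  have t: "t > 0" unfolding t_def using u v z by simp
  have lt: "ln t = a/(a+b) * ln u + b/(a+b) * ln v - ln z"
    unfolding t_def using u v z by (simp add: ln_mult ln_div ln_powr)
  have "ln (t * (t/u) powr (a/b)) = ln t + a/b * (ln t - ln u)"
    using t u by (simp add: ln_mult ln_div ln_powr)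
  also have "\<dots> = ln v - (1 + a/b) * ln z"
  proof -
    have e1: "a/(a+b) * (1 + a/b) = a/b" and e2: "b/(a+b) * (1 + a/b) = 1"
    proof -
      have "1 + a/b = (a+b)/b" using b by (simp add: field_simps)
      then show "a/(a+b) * (1 + a/b) = a/b" "b/(a+b) * (1 + a/b) = 1" using a b by simp_all
    qed
    have "ln t + a/b * (ln t - ln u) = (1 + a/b) * ln t - a/b * ln u" by (simp add: algebra_simps)
    also have "\<dots> = (a/(a+b) * (1 + a/b)) * ln u + (b/(a+b) * (1 + a/b)) * ln v - (1 + a/b) * ln z - a/b * ln u"
      unfolding lt by (simp add: algebra_simps)
    also have "\<dots> = ln v - (1 + a/b) * ln z" unfolding e1 e2 by simp
    finally show ?thesis .
  qed
  also have "\<dots> = ln (v * z powr (-(1+a/b)))"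
    using v z by (simp add: ln_mult ln_powr algebra_simps)
  finally show ?thesis using t u v z by (subst (asm) ln_inj_iff) auto
qed

lemma tilt_bound:
  fixes u v z a b :: real
  assumes u: "u \<ge> 0" and v: "v \<ge> 0" and z: "z > 0" and a: "a > 0" and b: "b > 0"
  defines "t \<equiv> u powr (a/(a+b)) * v powr (b/(a+b)) / z"
  shows "\<bar>t * ln (t/u)\<bar> \<le> u + v * (z powr (-(1+a/b)) * (b/a))"
proof (cases "u = 0 \<or> v = 0")
  case True then show ?thesis using u v z a b unfolding t_def by (auto intro!: mult_nonneg_nonneg divide_nonneg_nonneg)
next
  case False
  then have u': "u > 0" and v': "v > 0" using u v by auto
  have t: "t > 0" unfolding t_def using u' v' z by simp
  have lo: "t * ln (t/u) \<ge> - u"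
  proof -
    have "1 - u/t \<le> - ln (u/t)" using t u' by (intro ln_bound_low) simp
    then have "1 - u/t \<le> ln (t/u)" using t u' by (simp add: ln_div)
    then have "t * (1 - u/t) \<le> t * ln (t/u)" using t by (intro mult_left_mono) auto
    moreover have "t * (1 - u/t) = t - u" using t by (simp add: field_simps)
    ultimately show ?thesis using t by linarith
  qed
  have hi: "t * ln (t/u) \<le> v * (z powr (-(1+a/b)) * (b/a))"
  proof -
    have "ln (t/u) \<le> (t/u) powr (a/b) / (a/b)" using t u' a b by (intro ln_le_powr) auto
    then have "t * ln (t/u) \<le> t * ((t/u) powr (a/b) / (a/b))" using t by (intro mult_left_mono) auto
    also have "\<dots> = (t * (t/u) powr (a/b)) * (b/a)" by simp
    also have "\<dots> = v * z powr (-(1+a/b)) * (b/a)" unfolding t_def tilt_key[OF u' v' z a b] ..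
    finally show ?thesis by simp
  qed
  have "0 \<le> v * (z powr (-(1+a/b)) * (b/a))" using v a b by simp
  then show ?thesis using lo hi u by linarith
qed




lemma rn_dens:
  assumes M: "prob_space M" and N: "prob_space N" and sN: "sets N = sets M"
    and ac: "absolutely_continuous M N"
  shows "N = density M (\<lambda>x. ennreal (enn2real (RN_deriv M N x)))"
proof -
  interpret M: prob_space M by fact
  have "density M (RN_deriv M N) = N" by (rule M.density_RN_deriv[OF ac sN])
  moreover have "AE x in M. RN_deriv M N x \<noteq> \<infinity>"
    by (rule M.RN_deriv_finite[OF prob_space_imp_sigma_finite[OF N] ac sN])
  then have "AE x in M. RN_deriv M N x = ennreal (enn2real (RN_deriv M N x))"
    by eventually_elim (auto simp: less_top)
  then have "density M (RN_deriv M N) = density M (\<lambda>x. ennreal (enn2real (RN_deriv M N x)))"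
    by (intro density_cong) auto
  ultimately show ?thesis by simp
qed

lemma kl_density_eq:
  assumes Q: "prob_space Q" and f[measurable]: "f \<in> borel_measurable Q"
    and fn: "\<And>x. x \<in> space Q \<Longrightarrow> 0 \<le> f x"
    and Pd: "P = density Q (\<lambda>x. ennreal (f x))"
    and int: "integrable P (\<lambda>x. ln (f x))"
  shows "kl_div P Q = ereal (\<integral>x. ln (f x) \<partial>P)"
proof -
  interpret Q: prob_space Q by fact
  have sP: "sets P = sets Q" using Pd by simp
  have ac: "absolutely_continuous Q P" unfolding Pd by (rule absolutely_continuousI_density) simp
  have "AE x in Q. ennreal (f x) = RN_deriv Q P x"
    by (rule Q.RN_deriv_unique) (use Pd in auto)
  moreover have "AE x in Q. x \<in> space Q" by (rule AE_space)
  ultimately have "AE x in Q. enn2real (RN_deriv Q P x) = f x"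
    by eventually_elim (metis enn2real_ennreal fn)
  then have "AE x in P. enn2real (RN_deriv Q P x) = f x"
    by (rule absolutely_continuous_AE[OF sP ac])
  then have ae: "AE x in P. ln (enn2real (RN_deriv Q P x)) = ln (f x)"
    by eventually_elim simp
  have m1: "(\<lambda>x. ln (enn2real (RN_deriv Q P x))) \<in> borel_measurable P"
    using sP by (simp add: measurable_cong_sets[OF sP refl])
  have m2: "(\<lambda>x. ln (f x)) \<in> borel_measurable P" using sP by (simp add: measurable_cong_sets[OF sP refl])
  have i: "integrable P (\<lambda>x. ln (enn2real (RN_deriv Q P x)))"
    using integrable_cong_AE[OF m1 m2 ae] int by simp
  show ?thesis unfolding kl_div_def using sP ac i integral_cong_AE[OF m1 m2 ae] by simp
qed





locale prop6 =
  fixes MA :: "'a measure" and MB :: "'b measure"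
    and QX :: "'a measure" and RXY :: "('a \<times> 'b) measure"
    and K :: "'a \<Rightarrow> 'b measure" and T :: "'a measure"
    and a1 a2 lam :: real and mu :: "'a measure" and q r :: "'a \<Rightarrow> real" and z :: real
  assumes QX: "prob_space QX" "sets QX = sets MA"
    and RXY: "prob_space RXY" "sets RXY = sets (MA \<Otimes>\<^sub>M MB)"
    and K: "K \<in> MA \<rightarrow>\<^sub>M prob_algebra MB"
    and cond: "RXY = kcomp MA MB (distr RXY MA fst) K"
    and a: "a1 > 0" "a2 > 0"
    and lam: "lam = a1 / (a1 + a2)"
    and mu: "sigma_finite_measure mu"
    and qm: "q \<in> borel_measurable mu" and rm: "r \<in> borel_measurable mu"
    and nn: "\<forall>x\<in>space mu. 0 \<le> q x \<and> 0 \<le> r x"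
    and Qd: "QX = density mu (\<lambda>x. ennreal (q x))"
    and Rd: "distr RXY MA fst = density mu (\<lambda>x. ennreal (r x))"
    and Zd: "ennreal z = (\<integral>\<^sup>+x. ennreal (q x powr lam * r x powr (1 - lam)) \<partial>mu)"
    and z_pos: "0 < z"
    and Td: "T = density mu (\<lambda>x. ennreal (q x powr lam * r x powr (1 - lam)) / ennreal z)"
begin

abbreviation "RX \<equiv> distr RXY MA fst"
definition "t x = q x powr lam * r x powr (1 - lam) / z"

lemma sets_mu[measurable_cong]: "sets mu = sets MA"
  using QX(2) Qd by simp

lemma space_mu: "space mu = space MA"
  using sets_mu by (rule sets_eq_imp_space_eq)

lemma qm'[measurable]: "q \<in> borel_measurable MA" and rm'[measurable]: "r \<in> borel_measurable MA"
  using qm rm measurable_cong_sets[OF sets_mu refl] by auto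

lemma qn: "x \<in> space MA \<Longrightarrow> 0 \<le> q x" and rn: "x \<in> space MA \<Longrightarrow> 0 \<le> r x"
  using nn space_mu by auto


lemma lam01: "0 < lam" "lam < 1" "1 - lam = a2 / (a1 + a2)"
  using a unfolding lam by (auto simp: field_simps)

lemma tm[measurable]: "t \<in> borel_measurable MA" unfolding t_def by measurable

lemma tn: "x \<in> space MA \<Longrightarrow> 0 \<le> t x" unfolding t_def using qn rn z_pos by simp

lemma t_pos_iff: "x \<in> space MA \<Longrightarrow> 0 < t x \<longleftrightarrow> 0 < q x \<and> 0 < r x"
proof -
  assume x: "x \<in> space MA"
  have "0 < t x \<longleftrightarrow> 0 < q x powr lam * r x powr (1 - lam)" unfolding t_def using z_pos by (simp add: divide_pos_pos zero_less_divide_iff)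
  also have "\<dots> \<longleftrightarrow> q x \<noteq> 0 \<and> r x \<noteq> 0" by (simp add: zero_less_mult_iff)
  also have "\<dots> \<longleftrightarrow> 0 < q x \<and> 0 < r x" using qn[OF x] rn[OF x] by auto
  finally show ?thesis .
qed

lemma tm_mu[measurable]: "t \<in> borel_measurable mu" using tm measurable_cong_sets[OF sets_mu refl] by blast

lemma T_eq: "T = density mu (\<lambda>x. ennreal (t x))"
proof -
  have eq: "ennreal (q x powr lam * r x powr (1 - lam)) / ennreal z = ennreal (t x)" for x
  proof -
    have "ennreal (q x powr lam * r x powr (1 - lam)) / ennreal z = ennreal (q x powr lam * r x powr (1 - lam) / z)"
      by (rule divide_ennreal) (auto intro: z_pos)
    then show ?thesis unfolding t_def .
  qed
  have "(\<lambda>x. ennreal (q x powr lam * r x powr (1 - lam)) / ennreal z) = (\<lambda>x. ennreal (t x))"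
    using eq by auto
  then show ?thesis unfolding Td by simp
qed

lemma sets_T: "sets T = sets MA" using T_eq sets_mu by simp
lemma space_T: "space T = space MA" using T_eq space_mu by simp

lemma prob_T: "prob_space T"
proof (rule prob_spaceI)
  have "emeasure T (space T) = (\<integral>\<^sup>+x. ennreal (t x) \<partial>mu)"
    unfolding T_eq by (subst nn_integral_density[of _ _ "\<lambda>_. 1", simplified, symmetric]) auto
  also have "\<dots> = (\<integral>\<^sup>+x. ennreal (q x powr lam * r x powr (1 - lam)) * ennreal (1 / z) \<partial>mu)"
    unfolding t_def using z_pos by (intro nn_integral_cong) (simp add: ennreal_mult'[symmetric])
  also have "\<dots> = ennreal z * ennreal (1 / z)" unfolding Zd using qm rm by (subst nn_integral_multc) auto
  also have "\<dots> = 1" using z_pos by (simp add: ennreal_mult'[symmetric])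
  finally show "emeasure T (space T) = 1" .
qed


lemma fstm[measurable]: "fst \<in> RXY \<rightarrow>\<^sub>M MA"
  by (subst measurable_cong_sets[OF RXY(2) refl]) simp

lemma prob_RX: "prob_space RX" using RXY(1) by (simp add: prob_space.prob_space_distr)
lemma sets_RX: "sets RX = sets MA" by simp
lemma space_ne: "space MA \<noteq> {}"
  using prob_space.not_empty[OF prob_RX] by simp

lemma dens_integrable:
  assumes "prob_space (density M (\<lambda>x. ennreal (f x)))" "f \<in> borel_measurable M" "\<And>x. x \<in> space M \<Longrightarrow> 0 \<le> f x"
  shows "integrable M f"
proof (rule integrableI_nonneg)
  interpret D: prob_space "density M (\<lambda>x. ennreal (f x))" by fact
  have "(\<integral>\<^sup>+x. ennreal (f x) \<partial>M) = (\<integral>\<^sup>+x. 1 \<partial>density M (\<lambda>x. ennreal (f x)))"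
    using assms(2) by (subst nn_integral_density) auto
  also have "\<dots> = 1" using D.emeasure_space_1 by simp
  finally show "(\<integral>\<^sup>+x. ennreal (f x) \<partial>M) < \<infinity>" by simp
qed (use assms in auto)

lemma q_int: "integrable mu q"
  using QX(1) qm nn unfolding Qd by (intro dens_integrable) auto
lemma r_int: "integrable mu r"
  using prob_RX rm nn unfolding Rd by (intro dens_integrable) auto

lemma T_QX: "T = density QX (\<lambda>x. ennreal (t x / q x))"
proof -
  have "density QX (\<lambda>x. ennreal (t x / q x)) = density mu (\<lambda>x. ennreal (q x) * ennreal (t x / q x))"
    unfolding Qd using qm by (subst density_density_eq) auto
  also have "\<dots> = density mu (\<lambda>x. ennreal (t x))"
  proof (rule density_cong)
    show "AE x in mu. ennreal (q x) * ennreal (t x / q x) = ennreal (t x)"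
    proof (rule AE_I2)
      fix x assume x: "x \<in> space mu"
      then have x': "x \<in> space MA" using space_mu by simp
      show "ennreal (q x) * ennreal (t x / q x) = ennreal (t x)"
        using qn[OF x'] tn[OF x'] t_pos_iff[OF x'] by (cases "q x = 0") (auto simp: ennreal_mult'[symmetric])
    qed
  qed (use qm in auto)
  finally show ?thesis using T_eq by simp
qed

lemma T_RX: "T = density RX (\<lambda>x. ennreal (t x / r x))"
proof -
  have "density RX (\<lambda>x. ennreal (t x / r x)) = density mu (\<lambda>x. ennreal (r x) * ennreal (t x / r x))"
    unfolding Rd using rm by (subst density_density_eq) auto
  also have "\<dots> = density mu (\<lambda>x. ennreal (t x))"
  proof (rule density_cong)
    show "AE x in mu. ennreal (r x) * ennreal (t x / r x) = ennreal (t x)"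
    proof (rule AE_I2)
      fix x assume x: "x \<in> space mu"
      then have x': "x \<in> space MA" using space_mu by simp
      show "ennreal (r x) * ennreal (t x / r x) = ennreal (t x)"
        using rn[OF x'] tn[OF x'] t_pos_iff[OF x'] by (cases "r x = 0") (auto simp: ennreal_mult'[symmetric])
    qed
  qed (use rm in auto)
  finally show ?thesis using T_eq by simp
qed

definition "Pstar = kcomp MA MB T K"

lemma Pstar_dens: "Pstar = density RXY (\<lambda>w. ennreal (t (fst w) / r (fst w)))"
proof -
  have "Pstar = kcomp MA MB (density RX (\<lambda>x. ennreal (t x / r x))) K"
    unfolding Pstar_def using T_RX by simp
  also have "\<dots> = density (kcomp MA MB RX K) (\<lambda>w. ennreal (t (fst w) / r (fst w)))"
    using space_ne by (intro kcomp_density[OF K]) auto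
  finally show ?thesis using cond by simp
qed

lemma Pstar_marg: "distr Pstar MA fst = T"
proof -
  have "distr Pstar MA fst = density RX (\<lambda>x. ennreal (t x / r x))"
    unfolding Pstar_dens by (subst density_distr) auto
  then show ?thesis using T_RX by simp
qed

lemma prob_Pstar: "prob_space Pstar" and sets_Pstar: "sets Pstar = sets (MA \<Otimes>\<^sub>M MB)"
proof -
  have TA: "T \<in> space (prob_algebra MA)" using prob_T sets_T by (simp add: space_prob_algebra)
  show "prob_space Pstar" unfolding Pstar_def kcomp_def by (rule prob_space_bind'[OF TA kern_meas[OF K]])
  show "sets Pstar = sets (MA \<Otimes>\<^sub>M MB)" unfolding Pstar_def kcomp_def by (rule sets_bind'[OF TA kern_meas[OF K]])
qed

end


context prop6 begin

lemma t_alt: "t x = q x powr (a1/(a1+a2)) * r x powr (a2/(a1+a2)) / z"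
  unfolding t_def by (simp only: lam01(3)) (simp only: lam)

lemma t_alt2: "t x = r x powr (a2/(a2+a1)) * q x powr (a1/(a2+a1)) / z"
  unfolding t_alt by (simp add: add.commute mult.commute)

lemma AE_T_pos: "AE x in T. 0 < q x \<and> 0 < r x \<and> 0 < t x"
proof -
  have "AE x in mu. 0 < ennreal (t x) \<longrightarrow> 0 < q x \<and> 0 < r x \<and> 0 < t x"
    by (rule AE_I2) (use t_pos_iff space_mu in auto)
  then show ?thesis unfolding T_eq by (subst AE_density) auto
qed

lemma int_T_q: "integrable T (\<lambda>x. ln (t x / q x))"
proof -
  define C where "C = z powr (-(1+a1/a2)) * (a2/a1)"
  have "integrable mu (\<lambda>x. t x *\<^sub>R ln (t x / q x))"
  proof (rule Bochner_Integration.integrable_bound)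
    show "integrable mu (\<lambda>x. q x + r x * C)" using q_int r_int by auto
    show "AE x in mu. norm (t x *\<^sub>R ln (t x / q x)) \<le> norm (q x + r x * C)"
    proof (rule AE_I2)
      fix x assume "x \<in> space mu"
      then have x: "x \<in> space MA" using space_mu by simp
      have C: "C \<ge> 0" unfolding C_def using a by simp
      have "\<bar>t x * ln (t x / q x)\<bar> \<le> q x + r x * C"
        unfolding t_alt C_def using tilt_bound[OF qn[OF x] rn[OF x] z_pos a] by simp
      then show "norm (t x *\<^sub>R ln (t x / q x)) \<le> norm (q x + r x * C)"
        using qn[OF x] rn[OF x] C by simp
    qed
  qed (use qm rm in auto)
  then show ?thesis unfolding T_eq
    by (subst integrable_density) (auto intro!: AE_I2 tn simp: space_mu)
qed

lemma int_T_r: "integrable T (\<lambda>x. ln (t x / r x))"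
proof -
  define C where "C = z powr (-(1+a2/a1)) * (a1/a2)"
  have "integrable mu (\<lambda>x. t x *\<^sub>R ln (t x / r x))"
  proof (rule Bochner_Integration.integrable_bound)
    show "integrable mu (\<lambda>x. r x + q x * C)" using q_int r_int by auto
    show "AE x in mu. norm (t x *\<^sub>R ln (t x / r x)) \<le> norm (r x + q x * C)"
    proof (rule AE_I2)
      fix x assume "x \<in> space mu"
      then have x: "x \<in> space MA" using space_mu by simp
      have C: "C \<ge> 0" unfolding C_def using a by simp
      have "\<bar>t x * ln (t x / r x)\<bar> \<le> r x + q x * C"
        unfolding t_alt2 C_def using tilt_bound[OF rn[OF x] qn[OF x] z_pos a(2) a(1)] by simp
      then show "norm (t x *\<^sub>R ln (t x / r x)) \<le> norm (r x + q x * C)"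
        using qn[OF x] rn[OF x] C by simp
    qed
  qed (use qm rm in auto)
  then show ?thesis unfolding T_eq
    by (subst integrable_density) (auto intro!: AE_I2 tn simp: space_mu)
qed

lemma kl_T: "kl_div T QX = ereal (\<integral>x. ln (t x / q x) \<partial>T)"
  by (rule kl_density_eq[OF QX(1) _ _ T_QX int_T_q]) (auto simp: measurable_cong_sets[OF QX(2) refl] QX(2) sets_eq_imp_space_eq[OF QX(2)] intro!: divide_nonneg_nonneg tn qn)

lemma kl_Pstar: "kl_div Pstar RXY = ereal (\<integral>x. ln (t x / r x) \<partial>T)"
proof -
  have i: "integrable Pstar (\<lambda>w. ln (t (fst w) / r (fst w)))"
  proof -
    have "integrable (distr Pstar MA fst) (\<lambda>x. ln (t x / r x))" using int_T_r Pstar_marg by simp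
    then show ?thesis by (subst (asm) integrable_distr_eq) (auto simp: measurable_cong_sets[OF sets_Pstar refl])
  qed
  have "kl_div Pstar RXY = ereal (\<integral>w. ln (t (fst w) / r (fst w)) \<partial>Pstar)"
    by (rule kl_density_eq[OF RXY(1) _ _ Pstar_dens i])
       (auto simp: measurable_cong_sets[OF RXY(2) refl] sets_eq_imp_space_eq[OF RXY(2)] space_pair_measure
             intro!: divide_nonneg_nonneg tn rn)
  also have "(\<integral>w. ln (t (fst w) / r (fst w)) \<partial>Pstar) = (\<integral>x. ln (t x / r x) \<partial>distr Pstar MA fst)"
    by (subst integral_distr) (auto simp: measurable_cong_sets[OF sets_Pstar refl])
  also have "\<dots> = (\<integral>x. ln (t x / r x) \<partial>T)" using Pstar_marg by simp
  finally show ?thesis .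
qed

lemma value_Pstar:
  "a1 * (\<integral>x. ln (t x / q x) \<partial>T) + a2 * (\<integral>x. ln (t x / r x) \<partial>T) = - (a1+a2) * ln z"
proof -
  interpret T: prob_space T by (rule prob_T)
  have "a1 * (\<integral>x. ln (t x / q x) \<partial>T) + a2 * (\<integral>x. ln (t x / r x) \<partial>T)
      = (\<integral>x. a1 * ln (t x / q x) + a2 * ln (t x / r x) \<partial>T)"
    using int_T_q int_T_r by simp
  also have "\<dots> = (\<integral>x. - (a1+a2) * ln z \<partial>T)"
  proof (rule integral_cong_AE)
    show "AE x in T. a1 * ln (t x / q x) + a2 * ln (t x / r x) = - (a1+a2) * ln z"
      using AE_T_pos
    proof eventually_elim
      case (elim x)
      then have q: "q x > 0" and r: "r x > 0" and tp: "t x > 0" by auto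
      have lt: "ln (t x) = lam * ln (q x) + (1 - lam) * ln (r x) - ln z"
        unfolding t_def using q r z_pos by (simp add: ln_mult ln_div ln_powr)
      have h1: "(a1+a2)*lam = a1" and h2: "(a1+a2)*(1-lam) = a2" using a lam by (auto simp: field_simps)
      have "(a1+a2) * ln (t x) = ((a1+a2)*lam) * ln (q x) + ((a1+a2)*(1-lam)) * ln (r x) - (a1+a2) * ln z"
        unfolding lt by (simp add: algebra_simps)
      then have e: "(a1+a2) * ln (t x) = a1 * ln (q x) + a2 * ln (r x) - (a1+a2) * ln z"
        unfolding h1 h2 .
      have "a1 * ln (t x / q x) + a2 * ln (t x / r x) = (a1+a2) * ln (t x) - a1 * ln (q x) - a2 * ln (r x)"
        using q r tp by (simp add: ln_div algebra_simps)
      also have "\<dots> = - (a1+a2) * ln z" unfolding e by (simp add: algebra_simps)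
      finally show ?case .
    qed
  qed (auto simp: measurable_cong_sets[OF sets_T refl])
  also have "\<dots> = - (a1+a2) * ln z" using T.prob_space by simp
  finally show ?thesis .
qed

end



lemma nn_le1:
  fixes f :: "'c \<Rightarrow> real"
  assumes f[measurable]: "f \<in> borel_measurable M" and fn: "\<And>x. x \<in> space M \<Longrightarrow> 0 \<le> f x"
    and le: "(\<integral>\<^sup>+x. ennreal (f x) \<partial>M) \<le> 1"
  shows "integrable M f" "integral\<^sup>L M f \<le> 1"
proof -
  have "(\<integral>\<^sup>+x. ennreal (f x) \<partial>M) < \<infinity>" using le by (rule le_less_trans) simp
  then show "integrable M f" by (intro integrableI_nonneg f) (use fn in \<open>auto intro!: AE_I2\<close>)
  have "integral\<^sup>L M f = enn2real (\<integral>\<^sup>+x. ennreal (f x) \<partial>M)"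
    by (rule integral_eq_nn_integral) (use fn in \<open>auto intro!: AE_I2\<close>)
  also have "\<dots> \<le> 1" using le by (simp add: enn2real_leI)
  finally show "integral\<^sup>L M f \<le> 1" .
qed

context prop6 begin

lemma ln_t_eq: assumes q: "q x > 0" and r: "r x > 0"
  shows "(a1+a2) * ln (t x) = a1 * ln (q x) + a2 * ln (r x) - (a1+a2) * ln z"
proof -
  have lt: "ln (t x) = lam * ln (q x) + (1 - lam) * ln (r x) - ln z"
    unfolding t_def using q r z_pos by (simp add: ln_mult ln_div ln_powr)
  have h1: "(a1+a2)*lam = a1" and h2: "(a1+a2)*(1-lam) = a2" using a lam by (auto simp: field_simps)
  have "(a1+a2) * ln (t x) = ((a1+a2)*lam) * ln (q x) + ((a1+a2)*(1-lam)) * ln (r x) - (a1+a2) * ln z"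
    unfolding lt by (simp add: algebra_simps)
  then show ?thesis unfolding h1 h2 .
qed

lemma main_ineq:
  fixes P :: "('a \<times> 'b) measure"
  assumes P: "prob_space P" and sP: "sets P = sets (MA \<Otimes>\<^sub>M MB)"
    and acR: "absolutely_continuous RXY P"
    and acQ: "absolutely_continuous QX (distr P MA fst)"
    and i1: "integrable (distr P MA fst) (\<lambda>x. ln (enn2real (RN_deriv QX (distr P MA fst) x)))"
    and i2: "integrable P (\<lambda>w. ln (enn2real (RN_deriv RXY P w)))"
  shows "- (a1+a2) * ln z \<le> a1 * (\<integral>x. ln (enn2real (RN_deriv QX (distr P MA fst) x)) \<partial>distr P MA fst)
            + a2 * (\<integral>w. ln (enn2real (RN_deriv RXY P w)) \<partial>P)" (is "?c \<le> ?L")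
    and "a1 * (\<integral>x. ln (enn2real (RN_deriv QX (distr P MA fst) x)) \<partial>distr P MA fst)
            + a2 * (\<integral>w. ln (enn2real (RN_deriv RXY P w)) \<partial>P) \<le> - (a1+a2) * ln z \<Longrightarrow> P = Pstar"
proof -
  interpret P: prob_space P by fact
  define PX where "PX = distr P MA fst"
  define p where "p x = enn2real (RN_deriv QX PX x)" for x
  define h where "h w = enn2real (RN_deriv RXY P w)" for w
  have fstP[measurable]: "fst \<in> P \<rightarrow>\<^sub>M MA" by (subst measurable_cong_sets[OF sP refl]) simp
  have sPX: "sets PX = sets MA" unfolding PX_def by simp
  have spP: "space P = space (MA \<Otimes>\<^sub>M MB)" using sP by (rule sets_eq_imp_space_eq)
  have spR: "space RXY = space (MA \<Otimes>\<^sub>M MB)" using RXY(2) by (rule sets_eq_imp_space_eq)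
  have prob_PX: "prob_space PX" unfolding PX_def by (rule P.prob_space_distr) simp
  have pmQ: "p \<in> borel_measurable QX" unfolding p_def by measurable
  have pm[measurable]: "p \<in> borel_measurable MA"
    using pmQ unfolding measurable_cong_sets[OF QX(2) refl] .
  have hmR[measurable]: "h \<in> borel_measurable RXY" unfolding h_def by measurable
  have hm[measurable]: "h \<in> borel_measurable (MA \<Otimes>\<^sub>M MB)"
    using hmR unfolding measurable_cong_sets[OF RXY(2) refl] .
  have hmP[measurable]: "h \<in> borel_measurable P" unfolding measurable_cong_sets[OF sP refl] by (rule hm)
  have pn: "0 \<le> p x" for x unfolding p_def by simp
  have hn: "0 \<le> h w" for w unfolding h_def by simp
  have PX_dens: "PX = density QX (\<lambda>x. ennreal (p x))"
    unfolding p_def by (rule rn_dens[OF QX(1) prob_PX]) (use sPX QX(2) acQ PX_def in auto)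
  have P_dens: "P = density RXY (\<lambda>w. ennreal (h w))"
    unfolding h_def by (rule rn_dens[OF RXY(1) P]) (use sP RXY(2) acR in auto)
  have PX_mu: "PX = density mu (\<lambda>x. ennreal (q x * p x))"
  proof -
    have "PX = density mu (\<lambda>x. ennreal (q x) * ennreal (p x))"
      unfolding PX_dens Qd using qm pm measurable_cong_sets[OF sets_mu refl]
      by (subst density_density_eq) auto
    also have "\<dots> = density mu (\<lambda>x. ennreal (q x * p x))"
      using pn by (simp add: ennreal_mult''[symmetric])
    finally show ?thesis .
  qed
  have ae_h: "AE w in P. 0 < h w"
  proof -
    have "AE w in RXY. 0 < ennreal (h w) \<longrightarrow> 0 < h w" by simp
    then show ?thesis unfolding P_dens by (subst AE_density) auto
  qed
  have ae_qp: "AE x in PX. 0 < q x \<and> 0 < p x"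
  proof -
    have "AE x in mu. 0 < ennreal (q x * p x) \<longrightarrow> 0 < q x \<and> 0 < p x"
      by (rule AE_I2) (use qn pn space_mu in \<open>auto simp: zero_less_mult_iff less_le\<close>)
    then show ?thesis unfolding PX_mu by (subst AE_density) (use qm pm measurable_cong_sets[OF sets_mu refl] in auto)
  qed
  have acRX: "absolutely_continuous RX PX"
    unfolding absolutely_continuous_def
  proof
    fix A assume A: "A \<in> null_sets RX"
    then have A': "A \<in> sets MA" and "emeasure RX A = 0" by auto
    then have "emeasure RXY (fst -` A \<inter> space RXY) = 0" by (simp add: emeasure_distr)
    moreover have "fst -` A \<inter> space RXY \<in> sets RXY" using A' by measurable
    ultimately have "fst -` A \<inter> space RXY \<in> null_sets RXY" by auto
    then have "fst -` A \<inter> space RXY \<in> null_sets P" using acR unfolding absolutely_continuous_def by auto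
    then have "emeasure P (fst -` A \<inter> space P) = 0" using spP spR by auto
    then have "emeasure PX A = 0" unfolding PX_def using A' by (simp add: emeasure_distr)
    then show "A \<in> null_sets PX" using A' sPX by auto
  qed
  have ae_r: "AE x in PX. 0 < r x"
  proof -
    have "AE x in mu. 0 < ennreal (r x) \<longrightarrow> 0 < r x" by simp
    then have "AE x in RX. 0 < r x" unfolding Rd by (subst AE_density) (use rm in auto)
    moreover have "sets PX = sets RX" using sPX by simp
    ultimately show ?thesis using absolutely_continuous_AE[OF _ acRX] by blast
  qed
  have ae_x: "AE w in P. 0 < q (fst w) \<and> 0 < p (fst w) \<and> 0 < r (fst w)"
  proof -
    have "AE x in PX. 0 < q x \<and> 0 < p x \<and> 0 < r x" using ae_qp ae_r by eventually_elim auto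
    then show ?thesis unfolding PX_def by (subst (asm) AE_distr_iff) auto
  qed
  define g where "g x = q x * p x / r x" for x
  define psi1 where "psi1 w = g (fst w) / h w" for w
  define psi2 where "psi2 x = t x / (q x * p x)" for x
  have gm[measurable]: "g \<in> borel_measurable MA" unfolding g_def by measurable
  have psi1m[measurable]: "psi1 \<in> borel_measurable (MA \<Otimes>\<^sub>M MB)" unfolding psi1_def by measurable
  have psi2m[measurable]: "psi2 \<in> borel_measurable MA" unfolding psi2_def by measurable
  have gn: "x \<in> space MA \<Longrightarrow> 0 \<le> g x" for x unfolding g_def using qn rn pn by simp
  have psi1n: "w \<in> space (MA \<Otimes>\<^sub>M MB) \<Longrightarrow> 0 \<le> psi1 w" for w
    unfolding psi1_def using gn hn by (auto simp: space_pair_measure intro!: divide_nonneg_nonneg)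
  have psi2n: "x \<in> space MA \<Longrightarrow> 0 \<le> psi2 x" for x unfolding psi2_def using qn tn pn by simp
  have B1': "(\<integral>\<^sup>+w. ennreal (g (fst w)) \<partial>RXY) \<le> 1"
  proof -
    have "(\<integral>\<^sup>+w. ennreal (g (fst w)) \<partial>RXY) = (\<integral>\<^sup>+x. ennreal (g x) \<partial>RX)"
      by (subst nn_integral_distr) auto
    also have "\<dots> = (\<integral>\<^sup>+x. ennreal (r x) * ennreal (g x) \<partial>mu)"
      unfolding Rd using rm by (subst nn_integral_density) (auto simp: measurable_cong_sets[OF sets_mu refl])
    also have "\<dots> \<le> (\<integral>\<^sup>+x. ennreal (q x * p x) \<partial>mu)"
    proof (rule nn_integral_mono)
      fix x assume "x \<in> space mu"
      then have x: "x \<in> space MA" using space_mu by simp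
      have "r x * g x \<le> q x * p x"
        unfolding g_def using rn[OF x] qn[OF x] pn[of x] by (cases "r x = 0") auto
      then show "ennreal (r x) * ennreal (g x) \<le> ennreal (q x * p x)"
        using rn[OF x] by (simp add: ennreal_mult'[symmetric] ennreal_leI)
    qed
    also have "\<dots> = (\<integral>\<^sup>+x. 1 \<partial>PX)"
      unfolding PX_mu by (subst nn_integral_density) (auto simp: measurable_cong_sets[OF sets_mu refl])
    also have "\<dots> = 1" using prob_space.emeasure_space_1[OF prob_PX] by simp
    finally show ?thesis .
  qed
  have B1: "(\<integral>\<^sup>+w. ennreal (psi1 w) \<partial>P) \<le> 1"
  proof -
    have "(\<integral>\<^sup>+w. ennreal (psi1 w) \<partial>P) = (\<integral>\<^sup>+w. ennreal (h w) * ennreal (psi1 w) \<partial>RXY)"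
      unfolding P_dens by (subst nn_integral_density) (auto simp: measurable_cong_sets[OF RXY(2) refl])
    also have "\<dots> \<le> (\<integral>\<^sup>+w. ennreal (g (fst w)) \<partial>RXY)"
    proof (rule nn_integral_mono)
      fix w assume "w \<in> space RXY"
      then have x: "fst w \<in> space MA" using spR by (auto simp: space_pair_measure)
      have "h w * psi1 w \<le> g (fst w)"
        unfolding psi1_def using hn[of w] gn[OF x] by (cases "h w = 0") auto
      then show "ennreal (h w) * ennreal (psi1 w) \<le> ennreal (g (fst w))"
        using hn[of w] by (simp add: ennreal_mult'[symmetric] ennreal_leI)
    qed
    also have "\<dots> \<le> 1" by (rule B1')
    finally show ?thesis .
  qed
  have B2: "(\<integral>\<^sup>+x. ennreal (psi2 x) \<partial>PX) \<le> 1"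
  proof -
    have "(\<integral>\<^sup>+x. ennreal (psi2 x) \<partial>PX) = (\<integral>\<^sup>+x. ennreal (q x * p x) * ennreal (psi2 x) \<partial>mu)"
      unfolding PX_mu by (subst nn_integral_density) (auto simp: measurable_cong_sets[OF sets_mu refl])
    also have "\<dots> \<le> (\<integral>\<^sup>+x. ennreal (t x) \<partial>mu)"
    proof (rule nn_integral_mono)
      fix x assume "x \<in> space mu"
      then have x: "x \<in> space MA" using space_mu by simp
      have "q x * p x * psi2 x \<le> t x"
        unfolding psi2_def using qn[OF x] pn[of x] tn[OF x] by (cases "q x * p x = 0") auto
      then show "ennreal (q x * p x) * ennreal (psi2 x) \<le> ennreal (t x)"
        using qn[OF x] pn[of x] by (simp add: ennreal_mult'[symmetric] ennreal_leI)
    qed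
    also have "\<dots> = (\<integral>\<^sup>+x. 1 \<partial>T)"
      unfolding T_eq by (subst nn_integral_density) auto
    also have "\<dots> = 1" using prob_space.emeasure_space_1[OF prob_T] by simp
    finally show ?thesis .
  qed
  have psi1mP[measurable]: "psi1 \<in> borel_measurable P" unfolding measurable_cong_sets[OF sP refl] by (rule psi1m)
  have psi2mPX[measurable]: "psi2 \<in> borel_measurable PX" unfolding measurable_cong_sets[OF sPX refl] by (rule psi2m)
  have int1: "integrable P psi1" and I1: "(\<integral>w. psi1 w \<partial>P) \<le> 1"
    using nn_le1[OF psi1mP _ B1] psi1n spP by auto
  have int2X: "integrable PX psi2" and I2X: "(\<integral>x. psi2 x \<partial>PX) \<le> 1"
    using nn_le1[OF psi2mPX _ B2] psi2n sets_eq_imp_space_eq[OF sPX] by auto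
  have int2: "integrable P (\<lambda>w. psi2 (fst w))"
    using int2X unfolding PX_def by (subst (asm) integrable_distr_eq) auto
  have I2eq: "(\<integral>w. psi2 (fst w) \<partial>P) = (\<integral>x. psi2 x \<partial>PX)"
    unfolding PX_def by (subst integral_distr) auto
  have i1': "integrable P (\<lambda>w. ln (p (fst w)))"
    using i1 unfolding PX_def[symmetric] p_def[symmetric] unfolding PX_def by (subst (asm) integrable_distr_eq) auto
  have I1eq: "(\<integral>x. ln (p x) \<partial>PX) = (\<integral>w. ln (p (fst w)) \<partial>P)"
    unfolding PX_def by (subst integral_distr) auto
  have i2': "integrable P (\<lambda>w. ln (h w))" using i2 unfolding h_def .
  define D where "D w = a1 * ln (p (fst w)) + a2 * ln (h w) + (a1+a2) * ln z
      - a2 * (1 - psi1 w) - (a1+a2) * (1 - psi2 (fst w))" for w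
  have intD: "integrable P D" unfolding D_def using i1' i2' int1 int2 by auto
  have ID: "(\<integral>w. D w \<partial>P) = a1 * (\<integral>w. ln (p (fst w)) \<partial>P) + a2 * (\<integral>w. ln (h w) \<partial>P) + (a1+a2) * ln z
      - a2 * (1 - (\<integral>w. psi1 w \<partial>P)) - (a1+a2) * (1 - (\<integral>w. psi2 (fst w) \<partial>P))"
    unfolding D_def using i1' i2' int1 int2 by (simp add: P.prob_space)
  have aeD: "AE w in P. D w = a2 * (- ln (psi1 w) - 1 + psi1 w) + (a1+a2) * (- ln (psi2 (fst w)) - 1 + psi2 (fst w))
                 \<and> 0 < psi1 w \<and> 0 < psi2 (fst w)"
    using ae_x ae_h AE_space[of P]
  proof eventually_elim
    case (elim w)
    then have q: "0 < q (fst w)" and pp: "0 < p (fst w)" and r: "0 < r (fst w)" and hp: "0 < h w"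
      and x: "fst w \<in> space MA" using spP by (auto simp: space_pair_measure)
    have tp: "0 < t (fst w)" using t_pos_iff[OF x] q r by simp
    have l1: "ln (psi1 w) = ln (q (fst w)) + ln (p (fst w)) - ln (r (fst w)) - ln (h w)"
      unfolding psi1_def g_def using q pp r hp by (simp add: ln_div ln_mult)
    have l2: "ln (psi2 (fst w)) = ln (t (fst w)) - ln (q (fst w)) - ln (p (fst w))"
      unfolding psi2_def using q pp tp by (simp add: ln_div ln_mult)
    have lt: "(a1+a2) * ln (t (fst w)) = a1 * ln (q (fst w)) + a2 * ln (r (fst w)) - (a1+a2) * ln z"
      by (rule ln_t_eq[OF q r])
    have "D w = a2 * (- ln (psi1 w) - 1 + psi1 w) + (a1+a2) * (- ln (psi2 (fst w)) - 1 + psi2 (fst w))"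
      unfolding D_def l1 l2 using lt by (simp add: algebra_simps)
    moreover have "0 < psi1 w" unfolding psi1_def g_def using q pp r hp by simp
    moreover have "0 < psi2 (fst w)" unfolding psi2_def using q pp tp by simp
    ultimately show ?case by simp
  qed
  have aeDn: "AE w in P. 0 \<le> D w"
    using aeD
  proof eventually_elim
    case (elim w)
    have "0 \<le> - ln (psi1 w) - 1 + psi1 w" using ln_bound_low[of "psi1 w"] elim by simp
    moreover have "0 \<le> - ln (psi2 (fst w)) - 1 + psi2 (fst w)" using ln_bound_low[of "psi2 (fst w)"] elim by simp
    ultimately show ?case using elim a by simp
  qed
  have IDn: "0 \<le> (\<integral>w. D w \<partial>P)" by (rule integral_nonneg_AE[OF aeDn])
  have L_eq: "?L = (\<integral>w. D w \<partial>P) - (a1+a2) * ln z + a2 * (1 - (\<integral>w. psi1 w \<partial>P))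
      + (a1+a2) * (1 - (\<integral>x. psi2 x \<partial>PX))"
    unfolding ID I2eq PX_def[symmetric] I1eq[symmetric] p_def[symmetric] h_def[symmetric] by simp
  have n1: "0 \<le> a2 * (1 - (\<integral>w. psi1 w \<partial>P))" using a I1 by simp
  have n2: "0 \<le> (a1+a2) * (1 - (\<integral>x. psi2 x \<partial>PX))" using a I2X by simp
  have e: "- (a1+a2) * ln z = - ((a1+a2) * ln z)" by (simp only: mult_minus_left)
  show "?c \<le> ?L" unfolding L_eq e using IDn n1 n2 by linarith
  assume "?L \<le> ?c"
  then have "(\<integral>w. D w \<partial>P) \<le> 0" unfolding L_eq e using n1 n2 by linarith
  then have "(\<integral>w. D w \<partial>P) = 0" using IDn by simp
  then have "AE w in P. D w = 0" using integral_nonneg_eq_0_iff_AE[OF intD aeDn] by simp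
  then have ae1: "AE w in P. psi1 w = 1 \<and> psi2 (fst w) = 1"
    using aeD
  proof eventually_elim
    case (elim w)
    have n1: "0 \<le> - ln (psi1 w) - 1 + psi1 w" using ln_bound_low[of "psi1 w"] elim by simp
    moreover have n2: "0 \<le> - ln (psi2 (fst w)) - 1 + psi2 (fst w)" using ln_bound_low[of "psi2 (fst w)"] elim by simp
    ultimately have "a2 * (- ln (psi1 w) - 1 + psi1 w) = 0" "(a1+a2) * (- ln (psi2 (fst w)) - 1 + psi2 (fst w)) = 0"
      using elim a by (smt (verit) mult_nonneg_nonneg)+
    then have "- ln (psi1 w) - 1 + psi1 w = 0" "- ln (psi2 (fst w)) - 1 + psi2 (fst w) = 0" using a by auto
    then show ?case using ln_eq1 elim by blast
  qed
  have ae2X: "AE x in PX. psi2 x = 1"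
  proof -
    have "AE w in P. psi2 (fst w) = 1" using ae1 by auto
    then show ?thesis unfolding PX_def by (subst AE_distr_iff) auto
  qed
  have ae2mu: "AE x in mu. 0 < ennreal (q x * p x) \<longrightarrow> t x = q x * p x"
  proof -
    have "AE x in mu. 0 < ennreal (q x * p x) \<longrightarrow> psi2 x = 1"
      using ae2X unfolding PX_mu by (subst (asm) AE_density) (auto simp: measurable_cong_sets[OF sets_mu refl])
    then show ?thesis by eventually_elim (auto simp: psi2_def divide_eq_1_iff)
  qed
  have PX_T: "PX = T"
  proof (rule prob_le_eq[OF prob_PX])
    show "sets T = sets PX" using sets_T sPX by simp
    show "emeasure T (space T) \<le> 1" using prob_space.emeasure_space_1[OF prob_T] by simp
    fix A assume A: "A \<in> sets PX"
    then have Amu: "A \<in> sets mu" using sPX sets_mu by simp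
    have "emeasure PX A = (\<integral>\<^sup>+x. ennreal (q x * p x) * indicator A x \<partial>mu)"
      unfolding PX_mu using Amu by (subst emeasure_density) (auto simp: measurable_cong_sets[OF sets_mu refl])
    also have "\<dots> \<le> (\<integral>\<^sup>+x. ennreal (t x) * indicator A x \<partial>mu)"
    proof (rule nn_integral_mono_AE)
      show "AE x in mu. ennreal (q x * p x) * indicator A x \<le> ennreal (t x) * indicator A x"
        using ae2mu AE_space[of mu]
      proof eventually_elim
        case (elim x)
        then have x: "x \<in> space MA" using space_mu by simp
        show ?case
        proof (cases "q x * p x = 0")
          case True then show ?thesis by (simp only: ennreal_0 mult_zero_left zero_le)
        next
          case False
          then have "0 < q x * p x" using qn[OF x] pn[of x] by (simp add: less_le)
          then show ?thesis using elim by simp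
        qed
      qed
    qed
    also have "\<dots> = emeasure T A"
      unfolding T_eq using Amu by (subst emeasure_density) auto
    finally show "emeasure PX A \<le> emeasure T A" .
  qed
  have ae1R: "AE w in RXY. 0 < h w \<longrightarrow> h w = g (fst w)"
  proof -
    have "AE w in P. psi1 w = 1" using ae1 by auto
    then have "AE w in RXY. 0 < ennreal (h w) \<longrightarrow> psi1 w = 1"
      unfolding P_dens by (subst (asm) AE_density) auto
    then show ?thesis by eventually_elim (auto simp: psi1_def divide_eq_1_iff)
  qed
  have P_g: "P = density RXY (\<lambda>w. ennreal (g (fst w)))"
  proof (rule prob_le_eq[OF P])
    show "sets (density RXY (\<lambda>w. ennreal (g (fst w)))) = sets P" using sP RXY(2) by simp
    have "emeasure (density RXY (\<lambda>w. ennreal (g (fst w)))) (space (density RXY (\<lambda>w. ennreal (g (fst w)))))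
        = (\<integral>\<^sup>+w. ennreal (g (fst w)) \<partial>RXY)"
      by (subst emeasure_density) (auto intro!: nn_integral_cong simp: indicator_def)
    then show "emeasure (density RXY (\<lambda>w. ennreal (g (fst w)))) (space (density RXY (\<lambda>w. ennreal (g (fst w))))) \<le> 1"
      using B1' by simp
    fix A assume A: "A \<in> sets P"
    then have AR: "A \<in> sets RXY" using sP RXY(2) by simp
    have "emeasure P A = (\<integral>\<^sup>+w. ennreal (h w) * indicator A w \<partial>RXY)"
      unfolding P_dens using AR by (subst emeasure_density) auto
    also have "\<dots> \<le> (\<integral>\<^sup>+w. ennreal (g (fst w)) * indicator A w \<partial>RXY)"
    proof (rule nn_integral_mono_AE)
      show "AE w in RXY. ennreal (h w) * indicator A w \<le> ennreal (g (fst w)) * indicator A w"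
        using ae1R
      proof eventually_elim
        case (elim w)
        show ?case
        proof (cases "h w = 0")
          case True then show ?thesis by simp
        next
          case False
          then have "0 < h w" using hn[of w] by (simp add: less_le)
          then show ?thesis using elim by simp
        qed
      qed
    qed
    also have "\<dots> = emeasure (density RXY (\<lambda>w. ennreal (g (fst w)))) A"
      using AR by (subst emeasure_density) auto
    finally show "emeasure P A \<le> emeasure (density RXY (\<lambda>w. ennreal (g (fst w)))) A" .
  qed
  have RX_g: "density RX (\<lambda>x. ennreal (g x)) = PX"
  proof -
    have "AE x in mu. 0 < ennreal (q x * p x) \<longrightarrow> 0 < r x"
      using ae_r unfolding PX_mu by (subst (asm) AE_density) (auto simp: measurable_cong_sets[OF sets_mu refl])
    then have aeg: "AE x in mu. ennreal (r x) * ennreal (g x) = ennreal (q x * p x)"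
      using AE_space[of mu]
    proof eventually_elim
      case (elim x)
      then have x: "x \<in> space MA" using space_mu by simp
      show ?case
      proof (cases "q x * p x = 0")
        case True then show ?thesis unfolding g_def True by simp
      next
        case False
        then have "0 < q x * p x" using qn[OF x] pn[of x] by (simp add: less_le)
        then have "0 < r x" using elim by simp
        then show ?thesis unfolding g_def using rn[OF x] by (simp add: ennreal_mult'[symmetric])
      qed
    qed
    have "density RX (\<lambda>x. ennreal (g x)) = density mu (\<lambda>x. ennreal (r x) * ennreal (g x))"
      unfolding Rd using rm by (subst density_density_eq) (auto simp: measurable_cong_sets[OF sets_mu refl])
    also have "\<dots> = density mu (\<lambda>x. ennreal (q x * p x))"
      using aeg by (intro density_cong) (auto simp: measurable_cong_sets[OF sets_mu refl])
    finally show ?thesis using PX_mu by simp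
  qed
  have "P = density (kcomp MA MB RX K) (\<lambda>w. ennreal (g (fst w)))"
    using P_g cond by simp
  also have "\<dots> = kcomp MA MB (density RX (\<lambda>x. ennreal (g x))) K"
    using space_ne by (intro kcomp_density[OF K, symmetric]) auto
  also have "\<dots> = Pstar" unfolding RX_g PX_T Pstar_def ..
  finally show "P = Pstar" .
qed

end



context prop6 begin

lemma F_Pstar: "ereal a1 * kl_div (distr Pstar MA fst) QX + ereal a2 * kl_div Pstar RXY = ereal (- (a1+a2) * ln z)"
  unfolding Pstar_marg kl_T kl_Pstar value_Pstar[symmetric] by simp

lemma F_lower:
  assumes P: "prob_space P" and sP: "sets P = sets (MA \<Otimes>\<^sub>M MB)"
  shows "ereal (- (a1+a2) * ln z) \<le> ereal a1 * kl_div (distr P MA fst) QX + ereal a2 * kl_div P RXY"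
    and "ereal a1 * kl_div (distr P MA fst) QX + ereal a2 * kl_div P RXY \<le> ereal (- (a1+a2) * ln z) \<Longrightarrow> P = Pstar"
proof -
  let ?c1 = "sets (distr P MA fst) = sets QX \<and> absolutely_continuous QX (distr P MA fst) \<and>
     integrable (distr P MA fst) (\<lambda>x. ln (enn2real (RN_deriv QX (distr P MA fst) x)))"
  let ?c2 = "sets P = sets RXY \<and> absolutely_continuous RXY P \<and>
     integrable P (\<lambda>x. ln (enn2real (RN_deriv RXY P x)))"
  let ?F = "ereal a1 * kl_div (distr P MA fst) QX + ereal a2 * kl_div P RXY"
  have k1: "kl_div (distr P MA fst) QX = (if ?c1 then ereal (\<integral>x. ln (enn2real (RN_deriv QX (distr P MA fst) x)) \<partial>distr P MA fst) else \<infinity>)"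
    unfolding kl_div_def ..
  have k2: "kl_div P RXY = (if ?c2 then ereal (\<integral>x. ln (enn2real (RN_deriv RXY P x)) \<partial>P) else \<infinity>)"
    unfolding kl_div_def ..
  have inf: "?F = \<infinity>" if "\<not> (?c1 \<and> ?c2)"
    using that a unfolding k1 k2 by (auto simp: ereal_mult_infty)
  have fin: "?F = ereal (a1 * (\<integral>x. ln (enn2real (RN_deriv QX (distr P MA fst) x)) \<partial>distr P MA fst)
            + a2 * (\<integral>w. ln (enn2real (RN_deriv RXY P w)) \<partial>P))" if "?c1 \<and> ?c2"
    using that unfolding k1 k2 by simp
  show "ereal (- (a1+a2) * ln z) \<le> ?F"
  proof (cases "?c1 \<and> ?c2")
    case True
    then show ?thesis unfolding fin[OF True] using main_ineq(1)[OF P sP] by simp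
  next
    case False
    then have "?F = \<infinity>" by (rule inf)
    then show ?thesis by (simp only: ereal_less_eq(1))
  qed
  assume le: "?F \<le> ereal (- (a1+a2) * ln z)"
  have True: "?c1 \<and> ?c2"
  proof (rule ccontr)
    assume "\<not> (?c1 \<and> ?c2)"
    then have Fi: "?F = \<infinity>" by (rule inf)
    from le show False unfolding Fi by simp
  qed
  show "P = Pstar" using le unfolding fin[OF True] using main_ineq(2)[OF P sP] True by simp
qed

end




theorem proposition6:
  fixes MA :: "'a measure" and MB :: "'b measure"
    and QX :: "'a measure" and RXY :: "('a \<times> 'b) measure"
    and K :: "'a \<Rightarrow> 'b measure" and T :: "'a measure"
    and a1 a2 :: real
  assumes QX: "prob_space QX" "sets QX = sets MA"
    and RXY: "prob_space RXY" "sets RXY = sets (MA \<Otimes>\<^sub>M MB)"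
    and K: "K \<in> MA \<rightarrow>\<^sub>M prob_algebra MB"
    and cond: "RXY = kcomp MA MB (distr RXY MA fst) K"
    and a: "a1 > 0" "a2 > 0"
    and T: "tilted (a1 / (a1 + a2)) QX (distr RXY MA fst) T"
  shows "{P. prob_space P \<and> sets P = sets (MA \<Otimes>\<^sub>M MB) \<and>
             (\<forall>P'. prob_space P' \<and> sets P' = sets (MA \<Otimes>\<^sub>M MB) \<longrightarrow>
                ereal a1 * kl_div (distr P MA fst) QX + ereal a2 * kl_div P RXY
                \<le> ereal a1 * kl_div (distr P' MA fst) QX + ereal a2 * kl_div P' RXY)}
         = {kcomp MA MB T K}"
proof -
  obtain mu f g where mu: "sigma_finite_measure mu" and fm: "f \<in> borel_measurable mu"
    and gm: "g \<in> borel_measurable mu" and nn: "\<forall>x\<in>space mu. 0 \<le> f x \<and> 0 \<le> g x"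
    and Qd: "QX = density mu (\<lambda>x. ennreal (f x))"
    and Rd: "distr RXY MA fst = density mu (\<lambda>x. ennreal (g x))"
    and Z: "0 < (\<integral>\<^sup>+x. ennreal (f x powr (a1 / (a1 + a2)) * g x powr (1 - a1 / (a1 + a2))) \<partial>mu)"
      "(\<integral>\<^sup>+x. ennreal (f x powr (a1 / (a1 + a2)) * g x powr (1 - a1 / (a1 + a2))) \<partial>mu) < \<infinity>"
    and Td: "T = density mu (\<lambda>x. ennreal (f x powr (a1 / (a1 + a2)) * g x powr (1 - a1 / (a1 + a2)))
          / (\<integral>\<^sup>+x. ennreal (f x powr (a1 / (a1 + a2)) * g x powr (1 - a1 / (a1 + a2))) \<partial>mu))"
    using T unfolding tilted_def Let_def by (elim exE conjE) (rule that; assumption)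
  define Z where "Z = (\<integral>\<^sup>+x. ennreal (f x powr (a1 / (a1 + a2)) * g x powr (1 - a1 / (a1 + a2))) \<partial>mu)"
  define zr where "zr = enn2real Z"
  have Zfin: "Z < \<infinity>" and Zpos: "0 < Z" using Z unfolding Z_def[symmetric] by auto
  have Zz: "Z = ennreal zr" unfolding zr_def using Zfin by (simp add: less_top)
  have zpos: "0 < zr" unfolding zr_def using Zfin Zpos by (simp add: enn2real_positive_iff)
  have Zd': "ennreal zr = (\<integral>\<^sup>+x. ennreal (f x powr (a1 / (a1 + a2)) * g x powr (1 - a1 / (a1 + a2))) \<partial>mu)"
    using Zz unfolding Z_def by simp
  have Td': "T = density mu (\<lambda>x. ennreal (f x powr (a1 / (a1 + a2)) * g x powr (1 - a1 / (a1 + a2))) / ennreal zr)"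
    using Td unfolding Zd' .
  interpret prop6 MA MB QX RXY K T a1 a2 "a1 / (a1 + a2)" mu f g zr
    by (rule prop6.intro[OF QX RXY K cond a refl mu fm gm nn Qd Rd Zd' zpos Td'])
  let ?F = "\<lambda>P. ereal a1 * kl_div (distr P MA fst) QX + ereal a2 * kl_div P RXY"
  show ?thesis
  proof (intro set_eqI iffI)
    fix P assume "P \<in> {P. prob_space P \<and> sets P = sets (MA \<Otimes>\<^sub>M MB) \<and>
             (\<forall>P'. prob_space P' \<and> sets P' = sets (MA \<Otimes>\<^sub>M MB) \<longrightarrow> ?F P \<le> ?F P')}"
    then have P: "prob_space P" "sets P = sets (MA \<Otimes>\<^sub>M MB)"
      and min: "\<And>P'. prob_space P' \<Longrightarrow> sets P' = sets (MA \<Otimes>\<^sub>M MB) \<Longrightarrow> ?F P \<le> ?F P'" by auto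
    have "?F P \<le> ?F Pstar" by (rule min[OF prob_Pstar sets_Pstar])
    then have "?F P \<le> ereal (- (a1+a2) * ln zr)" unfolding F_Pstar .
    then have "P = Pstar" by (rule F_lower(2)[OF P])
    then show "P \<in> {kcomp MA MB T K}" unfolding Pstar_def by simp
  next
    fix P assume "P \<in> {kcomp MA MB T K}"
    then have PP: "P = Pstar" unfolding Pstar_def by simp
    have "\<forall>P'. prob_space P' \<and> sets P' = sets (MA \<Otimes>\<^sub>M MB) \<longrightarrow> ?F Pstar \<le> ?F P'"
      unfolding F_Pstar using F_lower(1) by blast
    then show "P \<in> {P. prob_space P \<and> sets P = sets (MA \<Otimes>\<^sub>M MB) \<and>
             (\<forall>P'. prob_space P' \<and> sets P' = sets (MA \<Otimes>\<^sub>M MB) \<longrightarrow> ?F P \<le> ?F P')}"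
      unfolding PP using prob_Pstar sets_Pstar by simp
  qed
qed


end
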